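(* Consider an MPI computation in which every call by an MPI rank to a collective communication function is replaced by the two-phase wrapper (Phase 1: a call to MPI\_Barrier() on the same ranks, the "trivial barrier"; Phase 2: the original collective communication call), and in which checkpointing is governed by the two-phase checkpoint protocol described in the context. Then an MPI rank is never inside a collective communication call (Phase 2 of the wrapper) when a do-ckpt (checkpoint) message is received from the checkpoint coordinator.
   Context: Setting: a set of MPI ranks (processes) running concurrently, plus a separate checkpoint coordinator process that exchanges messages with each rank (each rank has a helper thread that receives and answers coordinator messages asynchronously). Events are ordered by Lamport's happens-before relation. Barrier axiom: for a given invocation of an MPI barrier, it never happens that a rank A exits the barrier before (under happens-before) another participating rank B enters that barrier. Two-phase wrapper: whenever the application invokes an MPI collective communication function, it instead executes a wrapper which first calls MPI\_Barrier() over the participating ranks (the "trivial barrier", Phase 1) and then calls the original collective communication function (Phase 2). A rank is "inCollectiveWrapper" while executing this wrapper. Checkpoint protocol. Messages: intend-to-ckpt, extra-iteration, do-ckpt. Rank states reported: ready, in-phase-1, exit-phase-2. Coordinator: send intend-to-ckpt to all ranks and receive a response from each rank; while some rank responded with state exit-phase-2, send extra-iteration to all ranks and receive a response from each rank; then send do-ckpt to all ranks. Rank, on receiving intend-to-ckpt or extra-iteration: if not in a collective wrapper, reply "ready"; if in a collective wrapper and in Phase 1, reply "in-phase-1"; if in a collective wrapper and in Phase 2, first finish executing the collective communication call, then reply "exit-phase-2" and set its state to ready. In all cases the rank then continues executing but waits (blocks) before its next collective communication call (i.e., before entering Phase 2 of any wrapper). Rank, on receiving do-ckpt: perform its local checkpoint;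 then, if it is waiting before a collective communication call, unblock and continue executing. *)

theory Defs
  imports Main
begin

text \<open>'r : MPI ranks; 'c : identifiers of collective-communication invocations.
  parts c : set of ranks participating in invocation c.
  calls r : the sequence of collective invocations issued by the application on rank r
  (each of them executed through the two-phase wrapper).\<close>

text \<open>Position of a rank w.r.t. the wrapper:
  Outside          -- not inCollectiveWrapper;
  InPhase1 c b     -- in Phase 1 of the wrapper for c (b = True: has exited the trivial
                      barrier but has not yet entered the collective call, i.e. still Phase 1);
  InPhase2 c       -- inside the original collective communication call (Phase 2).\<close>
datatype 'c loc = Outside | InPhase1 'c bool | InPhase2 'c

datatype msg = IntendCkpt | ExtraIteration | DoCkpt

datatype rstat = St_ready | St_in_phase_1 | St_exit_phase_2

datatype 'r cstate = CIdle | CCollect "'r \<Rightarrow> rstat option"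

record ('r, 'c) st =
  loc      :: "'r \<Rightarrow> 'c loc"
  idx      :: "'r \<Rightarrow> nat"            \<comment> \<open>number of completed wrapper invocations\<close>
  waiting  :: "'r \<Rightarrow> bool"            \<comment> \<open>must wait before its next collective call\<close>
  awaiting :: "'r \<Rightarrow> bool"            \<comment> \<open>helper must reply exit-phase-2 when Phase 2 finishes\<close>
  inbox    :: "'r \<Rightarrow> msg list"        \<comment> \<open>FIFO channel coordinator -> rank\<close>
  outbox   :: "'r \<Rightarrow> rstat list"      \<comment> \<open>FIFO channel rank -> coordinator\<close>
  coord    :: "'r cstate"
  entered  :: "('r \<times> 'c) set"         \<comment> \<open>(r,c): rank r has entered the trivial barrier of c\<close>

datatype 'r event =
    E_enter_wrapper 'r | E_exit_barrier 'r | E_enter_phase2 'r | E_exit_phase2 'r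
  | E_helper_recv 'r | E_recv_do_ckpt 'r
  | E_coord_start | E_coord_recv 'r | E_coord_decide

definition init_st :: "('r, 'c) st" where
  "init_st = \<lparr> loc = (\<lambda>_. Outside), idx = (\<lambda>_. 0), waiting = (\<lambda>_. False),
     awaiting = (\<lambda>_. False), inbox = (\<lambda>_. []), outbox = (\<lambda>_. []),
     coord = CIdle, entered = {} \<rparr>"

definition wf_mpi :: "('c \<Rightarrow> 'r set) \<Rightarrow> ('r \<Rightarrow> 'c list) \<Rightarrow> bool" where
  "wf_mpi parts calls \<longleftrightarrow> (\<forall>r. distinct (calls r)) \<and> (\<forall>r c. c \<in> set (calls r) \<longleftrightarrow> r \<in> parts c)"

inductive step :: "('c \<Rightarrow> 'r set) \<Rightarrow> ('r \<Rightarrow> 'c list) \<Rightarrow> ('r, 'c) st \<Rightarrow> 'r event \<Rightarrow> ('r, 'c) st \<Rightarrow> bool"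
  for parts :: "'c \<Rightarrow> 'r set" and calls :: "'r \<Rightarrow> 'c list" where
  \<comment> \<open>the application calls its next collective: the wrapper starts, entering the trivial barrier\<close>
  enter_wrapper: "\<lbrakk> loc s r = Outside; idx s r < length (calls r); c = calls r ! idx s r \<rbrakk> \<Longrightarrow>
     step parts calls s (E_enter_wrapper r)
       (s\<lparr> loc := (loc s)(r := InPhase1 c False), entered := insert (r, c) (entered s) \<rparr>)"
  \<comment> \<open>barrier axiom: exit only after every participant has entered the barrier\<close>
| exit_barrier: "\<lbrakk> loc s r = InPhase1 c False; \<forall>r' \<in> parts c. (r', c) \<in> entered s \<rbrakk> \<Longrightarrow>
     step parts calls s (E_exit_barrier r) (s\<lparr> loc := (loc s)(r := InPhase1 c True) \<rparr>)"
| enter_phase2: "\<lbrakk> loc s r = InPhase1 c True; \<not> waiting s r \<rbrakk> \<Longrightarrow>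
     step parts calls s (E_enter_phase2 r) (s\<lparr> loc := (loc s)(r := InPhase2 c) \<rparr>)"
| exit_phase2: "loc s r = InPhase2 c \<Longrightarrow>
     step parts calls s (E_exit_phase2 r)
       (s\<lparr> loc := (loc s)(r := Outside), idx := (idx s)(r := Suc (idx s r)),
           awaiting := (awaiting s)(r := False),
           outbox := (outbox s)(r := outbox s r @ (if awaiting s r then [St_exit_phase_2] else [])) \<rparr>)"
| helper_ready: "\<lbrakk> inbox s r = m # ms; m \<noteq> DoCkpt; \<not> awaiting s r; loc s r = Outside \<rbrakk> \<Longrightarrow>
     step parts calls s (E_helper_recv r)
       (s\<lparr> inbox := (inbox s)(r := ms), waiting := (waiting s)(r := True),
           outbox := (outbox s)(r := outbox s r @ [St_ready]) \<rparr>)"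
| helper_phase1: "\<lbrakk> inbox s r = m # ms; m \<noteq> DoCkpt; \<not> awaiting s r; loc s r = InPhase1 c b \<rbrakk> \<Longrightarrow>
     step parts calls s (E_helper_recv r)
       (s\<lparr> inbox := (inbox s)(r := ms), waiting := (waiting s)(r := True),
           outbox := (outbox s)(r := outbox s r @ [St_in_phase_1]) \<rparr>)"
| helper_phase2: "\<lbrakk> inbox s r = m # ms; m \<noteq> DoCkpt; \<not> awaiting s r; loc s r = InPhase2 c \<rbrakk> \<Longrightarrow>
     step parts calls s (E_helper_recv r)
       (s\<lparr> inbox := (inbox s)(r := ms), waiting := (waiting s)(r := True),
           awaiting := (awaiting s)(r := True) \<rparr>)"
  \<comment> \<open>helper receives do-ckpt: local checkpoint, then unblock\<close>
| recv_do_ckpt: "\<lbrakk> inbox s r = DoCkpt # ms; \<not> awaiting s r \<rbrakk> \<Longrightarrow>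
     step parts calls s (E_recv_do_ckpt r)
       (s\<lparr> inbox := (inbox s)(r := ms), waiting := (waiting s)(r := False) \<rparr>)"
| coord_start: "coord s = CIdle \<Longrightarrow>
     step parts calls s E_coord_start
       (s\<lparr> inbox := (\<lambda>r. inbox s r @ [IntendCkpt]), coord := CCollect (\<lambda>_. None) \<rparr>)"
| coord_recv: "\<lbrakk> coord s = CCollect resp; resp r = None; outbox s r = a # as \<rbrakk> \<Longrightarrow>
     step parts calls s (E_coord_recv r)
       (s\<lparr> outbox := (outbox s)(r := as), coord := CCollect (resp(r := Some a)) \<rparr>)"
| coord_extra: "\<lbrakk> coord s = CCollect resp; \<forall>r. resp r \<noteq> None; \<exists>r. resp r = Some St_exit_phase_2 \<rbrakk> \<Longrightarrow>
     step parts calls s E_coord_decide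
       (s\<lparr> inbox := (\<lambda>r. inbox s r @ [ExtraIteration]), coord := CCollect (\<lambda>_. None) \<rparr>)"
| coord_do: "\<lbrakk> coord s = CCollect resp; \<forall>r. resp r \<noteq> None; \<forall>r. resp r \<noteq> Some St_exit_phase_2 \<rbrakk> \<Longrightarrow>
     step parts calls s E_coord_decide
       (s\<lparr> inbox := (\<lambda>r. inbox s r @ [DoCkpt]), coord := CIdle \<rparr>)"

inductive reach :: "('c \<Rightarrow> 'r set) \<Rightarrow> ('r \<Rightarrow> 'c list) \<Rightarrow> ('r, 'c) st \<Rightarrow> bool"
  for parts calls where
  reach_init: "reach parts calls init_st"
| reach_step: "\<lbrakk> reach parts calls s; step parts calls s e s' \<rbrakk> \<Longrightarrow> reach parts calls s'"

end

theory Submission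
  imports Defs
begin

fun isP2 :: "'c loc \<Rightarrow> bool" where
  "isP2 (InPhase2 c) = True" | "isP2 _ = False"

fun okIb :: "msg list \<Rightarrow> bool \<Rightarrow> bool" where
  "okIb [m] g = (m \<noteq> DoCkpt)"
| "okIb [DoCkpt, m] g = (m \<noteq> DoCkpt \<and> g)"
| "okIb _ g = False"

fun Rk :: "'r cstate \<Rightarrow> 'r \<Rightarrow> msg list \<Rightarrow> rstat list \<Rightarrow> bool \<Rightarrow> bool \<Rightarrow> 'c loc \<Rightarrow> bool" where
  "Rk CIdle r ib ob aw w l =
     (ob = [] \<and> \<not> aw \<and> (ib = [] \<or> (ib = [DoCkpt] \<and> w \<and> \<not> isP2 l)))"
| "Rk (CCollect resp) r ib ob aw w l =
     ((resp r \<noteq> None \<and> ib = [] \<and> ob = [] \<and> \<not> aw \<and> (resp r \<noteq> Some St_exit_phase_2 \<longrightarrow> w \<and> \<not> isP2 l))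
    \<or> (resp r = None \<and> ob = [] \<and> \<not> aw \<and> okIb ib (w \<and> \<not> isP2 l))
    \<or> (resp r = None \<and> ib = [] \<and> ob = [] \<and> aw \<and> isP2 l)
    \<or> (resp r = None \<and> ib = [] \<and> \<not> aw \<and> (\<exists>a. ob = [a] \<and> (a \<noteq> St_exit_phase_2 \<longrightarrow> w \<and> \<not> isP2 l))))"

definition Inv :: "('r,'c) st \<Rightarrow> bool" where
  "Inv s \<longleftrightarrow> (\<forall>r. Rk (coord s) r (inbox s r) (outbox s r) (awaiting s r) (waiting s r) (loc s r))"

lemma inv_init: "Inv init_st"
  by (simp add: Inv_def init_st_def)

lemma okIb_cases: "okIb ib g \<longleftrightarrow> (\<exists>m. m \<noteq> DoCkpt \<and> (ib = [m] \<or> (ib = [DoCkpt, m] \<and> g)))"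
  by (cases "(ib, g)" rule: okIb.cases) auto

lemma Rk_w: "Rk c r ib ob aw w l \<Longrightarrow> isP2 l' = isP2 l \<Longrightarrow> Rk c r ib ob aw w l'"
  by (cases c) (auto simp: okIb_cases)

lemma Rk_wait: "Rk c r ib ob aw w l \<Longrightarrow> \<not> isP2 l \<Longrightarrow> \<not> w \<Longrightarrow> Rk c r ib ob aw w l'"
  by (cases c) (auto simp: okIb_cases)

lemma Inv_local:
  assumes "Inv s" "coord s' = coord s"
    and "\<And>r'. r' \<noteq> r \<Longrightarrow> inbox s' r' = inbox s r' \<and> outbox s' r' = outbox s r' \<and>
       awaiting s' r' = awaiting s r' \<and> waiting s' r' = waiting s r' \<and> loc s' r' = loc s r'"
    and "Rk (coord s) r (inbox s r) (outbox s r) (awaiting s r) (waiting s r) (loc s r) \<Longrightarrow>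
         Rk (coord s) r (inbox s' r) (outbox s' r) (awaiting s' r) (waiting s' r) (loc s' r)"
  shows "Inv s'"
  unfolding Inv_def
proof
  fix r'
  have R: "Rk (coord s) r' (inbox s r') (outbox s r') (awaiting s r') (waiting s r') (loc s r')"
    using assms(1) by (simp add: Inv_def)
  show "Rk (coord s') r' (inbox s' r') (outbox s' r') (awaiting s' r') (waiting s' r') (loc s' r')"
  proof (cases "r' = r")
    case True
    then show ?thesis using assms(2,4) R by simp
  next
    case False
    then show ?thesis using assms(2) assms(3)[OF False] R by simp
  qed
qed

lemma inv_step: assumes "step parts calls s e s'" "Inv s" shows "Inv s'"
  using assms(1)
proof (cases)
  case (enter_wrapper r c)
  show ?thesis
    by (rule Inv_local[OF assms(2), where r=r]) (auto simp: enter_wrapper intro: Rk_w)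
next
  case (exit_barrier r c)
  show ?thesis
    by (rule Inv_local[OF assms(2), where r=r]) (auto simp: exit_barrier intro: Rk_w)
next
  case (enter_phase2 r c)
  show ?thesis
    by (rule Inv_local[OF assms(2), where r=r]) (auto simp: enter_phase2 intro: Rk_wait)
next
  case (exit_phase2 r c)
  show ?thesis
    by (rule Inv_local[OF assms(2), where r=r]; cases "coord s"; auto simp: exit_phase2 okIb_cases)
next
  case (helper_ready r m ms)
  show ?thesis
    by (rule Inv_local[OF assms(2), where r=r]; cases "coord s"; auto simp: helper_ready okIb_cases)
next
  case (helper_phase1 r m ms c b)
  show ?thesis
    by (rule Inv_local[OF assms(2), where r=r]; cases "coord s"; auto simp: helper_phase1 okIb_cases)
next
  case (helper_phase2 r m ms c)
  show ?thesis
    by (rule Inv_local[OF assms(2), where r=r]; cases "coord s"; auto simp: helper_phase2 okIb_cases)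
next
  case (recv_do_ckpt r ms)
  show ?thesis
    by (rule Inv_local[OF assms(2), where r=r]; cases "coord s"; auto simp: recv_do_ckpt okIb_cases)
next
  case coord_start
  show ?thesis using assms(2) unfolding Inv_def
    by (auto simp: coord_start okIb_cases)
next
  case (coord_recv resp r a as)
  show ?thesis unfolding Inv_def
  proof
    fix r'
    have R: "Rk (coord s) r' (inbox s r') (outbox s r') (awaiting s r') (waiting s r') (loc s r')"
      using assms(2) by (simp add: Inv_def)
    show "Rk (coord s') r' (inbox s' r') (outbox s' r') (awaiting s' r') (waiting s' r') (loc s' r')"
    proof (cases "r' = r")
      case True
      then show ?thesis using R coord_recv by (auto simp: okIb_cases)
    next
      case False
      then show ?thesis using R coord_recv by auto
    qed
  qed
next
  case (coord_extra resp)
  show ?thesis using assms(2) unfolding Inv_def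
    by (auto simp: coord_extra okIb_cases)
next
  case (coord_do resp)
  show ?thesis using assms(2) unfolding Inv_def
    by (auto simp: coord_do okIb_cases)
qed

lemma inv_reach: "reach parts calls s \<Longrightarrow> Inv s"
  by (induction rule: reach.induct) (auto intro: inv_init inv_step)

theorem theorem1:
  fixes parts :: "'c \<Rightarrow> 'r set" and calls :: "'r \<Rightarrow> 'c list"
  assumes "wf_mpi parts calls"
    and "reach parts calls s"
    and "step parts calls s (E_recv_do_ckpt r) s'"
  shows "\<forall>c. loc s r \<noteq> InPhase2 c"
proof -
  have I: "Inv s" using assms(2) by (rule inv_reach)
  from assms(3) obtain ms where h: "inbox s r = DoCkpt # ms"
    by (cases rule: step.cases) auto
  have "Rk (coord s) r (inbox s r) (outbox s r) (awaiting s r) (waiting s r) (loc s r)"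
    using I by (simp add: Inv_def)
  then have "\<not> isP2 (loc s r)" using h by (cases "coord s") (auto simp: okIb_cases)
  then show ?thesis by auto
qed

end
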